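(* For every integer $m\ge2$, \[ L_m:=\int\cdots\int_{W_m}\frac{dx_1\cdots dx_m}{x_1\cdots x_m}=m!\,\zeta(m)-(m-1)\ln^m2-m!\sum_{p=0}^{m-2}\frac{\ln^p2}{p!}\operatorname{Li}_{m-p}\!\left(\tfrac12\right). \]
   Context: $W_m:=\{(x_1,\dots,x_m)\in[0,1]^m : x_i+x_j\ge1 \text{ for all } 1\le i<j\le m\}$. The polylogarithm is $\operatorname{Li}_s(z):=\sum_{r=1}^\infty z^r/r^s$ for $|z|<1$; $\zeta$ is the Riemann zeta function. *)

theory Defs
  imports "HOL-Analysis.Analysis"
begin

text \<open>W_m, with coordinates indexed by 0..m-1 (points are functions in PiE).\<close>
definition W :: "nat \<Rightarrow> (nat \<Rightarrow> real) set" where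
  "W m = {x \<in> PiE {..<m} (\<lambda>_. {0..1}). \<forall>i<m. \<forall>j<m. i < j \<longrightarrow> x i + x j \<ge> 1}"

definition polylog :: "nat \<Rightarrow> real \<Rightarrow> real" where
  "polylog s z = (\<Sum>r. z ^ Suc r / real (Suc r) ^ s)"

definition zeta_nat :: "nat \<Rightarrow> real" where
  "zeta_nat s = (\<Sum>n. 1 / real (Suc n) ^ s)"

end

theory Submission
  imports Defs
begin


lemma ln_int:
  assumes "0 < a" "a \<le> 1"
  shows "(\<integral>\<^sup>+y. ennreal (1/y) * indicator {a..1} y \<partial>lborel) = ennreal (- ln a)"
proof -
  have I: "((\<lambda>y. 1/y) has_integral (ln 1 - ln a)) {a..1}"
    apply (rule fundamental_theorem_of_calculus)
    using assms
    by (auto intro!: derivative_eq_intros simp: has_real_derivative_iff_has_vector_derivative[symmetric] field_simps)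
  have "(\<integral>\<^sup>+y. ennreal (1/y) * indicator {a..1} y \<partial>lborel) = ennreal (ln 1 - ln a)"
    using nn_integral_has_integral_lebesgue'[OF _ I] assms by auto
  then show ?thesis by simp
qed

fun S :: "real \<Rightarrow> nat \<Rightarrow> real \<Rightarrow> real" where
  "S r 0 u = 1/r"
| "S r (Suc n) u = u^(Suc n)/r + (Suc n)/r * S r n u"

lemma S_deriv:
  assumes "r > 0"
  shows "((\<lambda>u. - exp (-r*u) * S r n u) has_real_derivative (u^n * exp (-r*u))) (at u)"
proof (induction n)
  case 0
  show ?case using assms
    by (auto intro!: derivative_eq_intros simp: field_simps)
next
  case (Suc n)
  have e: "(\<lambda>u. - exp (-r*u) * S r (Suc n) u) = (\<lambda>u. - exp (-r*u) * u^(Suc n) / r + (Suc n)/r * (- exp (-r*u) * S r n u))"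
    by (auto simp: field_simps)
  have d1: "((\<lambda>u. - exp (-r*u) * u^(Suc n) / r) has_real_derivative
     (exp (-r*u) * u^(Suc n) - exp (-r*u) * (Suc n) * u^n / r)) (at u)"
    apply (rule derivative_eq_intros refl)+
    using assms apply (simp add: field_simps)
    using assms apply (simp only: diff_Suc_Suc minus_nat.diff_0)
    apply (simp add: field_simps)
    done
  have d2: "((\<lambda>u. (Suc n)/r * (- exp (-r*u) * S r n u)) has_real_derivative ((Suc n)/r * (u^n * exp (-r*u)))) (at u)"
    by (rule DERIV_cmult[OF Suc])
  show ?case unfolding e
    using DERIV_add[OF d1 d2] assms by (simp add: field_simps)
qed

lemma S_closed:
  assumes "r > 0"
  shows "S r n u = (\<Sum>p\<le>n. fact n / fact p * u^p / r^(n+1-p))"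
proof (induction n)
  case 0 then show ?case by simp
next
  case (Suc n)
  have "(Suc n)/r * (\<Sum>p\<le>n. fact n / fact p * u^p / r^(n+1-p)) = (\<Sum>p\<le>n. fact (Suc n) / fact p * u^p / r^(Suc n+1-p))"
    unfolding sum_distrib_left
  proof (rule sum.cong[OF refl])
    fix p assume "p \<in> {..n}"
    then have "r^(Suc n+1-p) = r * r^(n+1-p)" by (simp add: Suc_diff_le)
    then show "(Suc n)/r * (fact n / fact p * u^p / r^(n+1-p)) = fact (Suc n) / fact p * u^p / r^(Suc n+1-p)"
      using assms by (simp add: field_simps)
  qed
  then show ?case using Suc assms by simp
qed

lemma S_zero: "r > 0 \<Longrightarrow> S r n 0 = fact n / r^(n+1)"
  by (induction n) (auto simp: field_simps)

lemma exp_int: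
  assumes "r > 0" "b \<ge> 0"
  shows "((\<lambda>u. u^n * exp (-r*u)) has_integral (fact n / r^(n+1) - exp (-r*b) * S r n b)) {0..b}"
proof -
  have "((\<lambda>u. u^n * exp (-r*u)) has_integral ((- exp (-r*b) * S r n b) - (- exp (-r*0) * S r n 0))) {0..b}"
    apply (rule fundamental_theorem_of_calculus)
    using assms S_deriv[OF assms(1)]
    by (auto simp: has_real_derivative_iff_has_vector_derivative[symmetric] intro: has_field_derivative_at_within)
  then show ?thesis using S_zero[OF assms(1)] by simp
qed



lemma zeta_sums:
  assumes "s \<ge> 2"
  shows "(\<lambda>k. 1 / real (Suc k) ^ s) sums zeta_nat s"
proof -
  have "summable (\<lambda>k. inverse (real k ^ s))" by (rule inverse_power_summable[OF assms])
  then have "summable (\<lambda>k. inverse (real (Suc k) ^ s))" by (subst summable_Suc_iff)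
  then have "summable (\<lambda>k. 1 / real (Suc k) ^ s)" by (simp add: divide_inverse)
  then show ?thesis unfolding zeta_nat_def by (rule summable_sums)
qed

lemma polylog_sums:
  "(\<lambda>k. (1/2::real) ^ Suc k / real (Suc k) ^ s) sums polylog s (1/2)"
proof -
  have "summable (\<lambda>k. (1/2::real) ^ Suc k / real (Suc k) ^ s)"
  proof (rule summable_comparison_test)
    show "\<exists>N. \<forall>k\<ge>N. norm ((1/2::real) ^ Suc k / real (Suc k) ^ s) \<le> (1/2) ^ Suc k"
    proof (intro exI allI impI)
      fix k :: nat
      have "1 \<le> real (Suc k) ^ s" by simp
      then show "norm ((1/2::real) ^ Suc k / real (Suc k) ^ s) \<le> (1/2) ^ Suc k"
        by (simp add: divide_le_eq_1 field_simps)
    qed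
    show "summable (\<lambda>k. (1/2::real) ^ Suc k)"
      using summable_geometric[of "1/2::real"] by (simp add: summable_mult)
  qed
  then show ?thesis unfolding polylog_def by (rule summable_sums)
qed

lemma polylog_1: "polylog 1 (1/2) = ln 2"
proof -
  have "ln (1/2::real) = (\<Sum> n. (-1)^n * (1 / real (n + 1)) * (1/2 - 1)^(Suc n))"
    by (rule ln_series) auto
  also have "\<dots> = (\<Sum> n. - ((1/2::real) ^ Suc n / real (Suc n) ^ 1))"
  proof (rule suminf_cong)
    fix n
    have "(1/2 - 1::real)^(Suc n) = (-1)^Suc n * (1/2)^Suc n" by (simp flip: power_mult_distrib)
    then show "(-1)^n * (1 / real (n + 1)) * (1/2 - 1::real)^(Suc n) = - ((1/2::real) ^ Suc n / real (Suc n) ^ 1)"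
      by (simp add: field_simps power_mult_distrib[symmetric])
  qed
  also have "\<dots> = - polylog 1 (1/2)"
    using sums_minus[OF polylog_sums[of 1]] by (simp add: sums_iff)
  finally show ?thesis by (simp add: ln_div)
qed



definition Xval :: "nat \<Rightarrow> real" where
  "Xval n = fact n * zeta_nat (n+1) - (\<Sum>p\<le>n. fact n / fact p * ln 2 ^ p * polylog (n+1-p) (1/2))"

lemma I_sums:
  assumes "n \<ge> 1"
  shows "(\<lambda>k. fact n / real (Suc k)^(n+1) - exp (- real (Suc k) * ln 2) * S (real (Suc k)) n (ln 2)) sums Xval n"
proof -
  have e: "exp (- real (Suc k) * ln 2) * S (real (Suc k)) n (ln 2) =
     (\<Sum>p\<le>n. (fact n / fact p * ln 2 ^ p) * ((1/2::real) ^ Suc k / real (Suc k) ^ (n+1-p)))" for k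
  proof -
    have e2: "exp (real (Suc k) * ln 2) = (2::real) ^ Suc k"
      by (simp only: exp_of_nat_mult) simp
    have "exp (- real (Suc k) * ln 2) = inverse (exp (real (Suc k) * ln 2))"
      by (simp add: exp_minus[symmetric] algebra_simps)
    also have "\<dots> = (1/2::real) ^ Suc k" by (simp only: e2) (simp add: power_one_over inverse_eq_divide)
    finally have "exp (- real (Suc k) * ln 2) = (1/2::real) ^ Suc k" .
    then show ?thesis
      unfolding S_closed[of "real (Suc k)", OF of_nat_0_less_iff[THEN iffD2, OF zero_less_Suc]] sum_distrib_left
      by (intro sum.cong refl) (simp add: field_simps)
  qed
  have z: "(\<lambda>k. fact n * (1 / real (Suc k)^(n+1))) sums (fact n * zeta_nat (n+1))"
    by (rule sums_mult, rule zeta_sums) (use assms in simp)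
  have p: "(\<lambda>k. \<Sum>p\<le>n. (fact n / fact p * ln 2 ^ p) * ((1/2::real) ^ Suc k / real (Suc k) ^ (n+1-p)))
      sums (\<Sum>p\<le>n. fact n / fact p * ln 2 ^ p * polylog (n+1-p) (1/2))"
    by (rule sums_sum, rule sums_mult, rule polylog_sums)
  show ?thesis using sums_diff[OF z p] unfolding e Xval_def by simp
qed

lemma I_nonneg:
  "0 \<le> fact n / real (Suc k)^(n+1) - exp (- real (Suc k) * ln 2) * S (real (Suc k)) n (ln 2)"
proof -
  have I: "((\<lambda>u. u^n * exp (- real (Suc k) * u)) has_integral
     (fact n / real (Suc k)^(n+1) - exp (- real (Suc k) * ln 2) * S (real (Suc k)) n (ln 2))) {0..ln 2}"
    using exp_int[of "real (Suc k)" "ln 2" n] by simp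
  show ?thesis by (rule has_integral_nonneg[OF I]) simp
qed

lemma Xval_nonneg: "n \<ge> 1 \<Longrightarrow> 0 \<le> Xval n"
  by (rule sums_le[OF _ sums_zero I_sums]) (use I_nonneg in auto)

lemma T_int:
  assumes "n \<ge> 1"
  shows "(\<integral>\<^sup>+t. ennreal ((- ln (1-t))^n / t) * indicator {0..1/2} t \<partial>lborel) = ennreal (Xval n)"
proof -
  define f where "f t = (- ln (1-t))^n / t" for t :: real
  have sub: "(\<integral>\<^sup>+x. f x * indicator {(\<lambda>u. 1 - exp (-u)) 0..(\<lambda>u. 1 - exp (-u)) (ln 2)} x \<partial>lborel) =
             (\<integral>\<^sup>+x. f ((\<lambda>u. 1 - exp (-u)) x) * (\<lambda>u. exp (-u)) x * indicator {0..ln 2} x \<partial>lborel)"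
    apply (rule nn_integral_substitution)
    unfolding set_borel_measurable_def f_def
        apply measurable
    by (auto intro!: derivative_eq_intros continuous_intros)
  have g: "(\<lambda>u::real. 1 - exp (-u)) 0 = 0" "(\<lambda>u::real. 1 - exp (-u)) (ln 2) = 1/2"
    by (auto simp: exp_minus)
  have "(\<integral>\<^sup>+t. ennreal ((- ln (1-t))^n / t) * indicator {0..1/2} t \<partial>lborel) =
        (\<integral>\<^sup>+u. ennreal (f (1 - exp (-u)) * exp (-u)) * indicator {0..ln 2} u \<partial>lborel)"
  proof -
    have 1: "(\<integral>\<^sup>+t. ennreal ((- ln (1-t))^n / t) * indicator {0..1/2} t \<partial>lborel)
       = (\<integral>\<^sup>+x. f x * indicator {0..1/2} x \<partial>lborel)"
      by (intro nn_integral_cong) (simp add: indicator_def f_def)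
    have 2: "(\<integral>\<^sup>+u. ennreal (f (1 - exp (-u)) * exp (-u)) * indicator {0..ln 2} u \<partial>lborel)
       = (\<integral>\<^sup>+x. f ((\<lambda>u. 1 - exp (-u)) x) * (\<lambda>u. exp (-u)) x * indicator {0..ln 2} x \<partial>lborel)"
      by (intro nn_integral_cong) (simp add: indicator_def)
    show ?thesis unfolding 1 2 sub[unfolded g] ..
  qed
  also have "\<dots> = (\<integral>\<^sup>+u. (\<Sum>k. ennreal (u^n * exp (- real (Suc k) * u)) * indicator {0..ln 2} u) \<partial>lborel)"
  proof (rule nn_integral_cong)
    fix u :: real
    show "ennreal (f (1 - exp (-u)) * exp (-u)) * indicator {0..ln 2} u =
      (\<Sum>k. ennreal (u^n * exp (- real (Suc k) * u)) * indicator {0..ln 2} u)"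
    proof (cases "0 \<le> u \<and> u \<le> ln 2")
      case False then show ?thesis by simp
    next
      case True
      have "(\<Sum>k. ennreal (u^n * exp (- real (Suc k) * u))) = ennreal (f (1 - exp (-u)) * exp (-u))"
      proof (cases "u = 0")
        case True then show ?thesis using assms by (simp add: f_def zero_power)
      next
        case False
        with True have u: "u > 0" by auto
        have "(\<lambda>k. exp (-u) ^ k) sums (1 / (1 - exp (-u)))"
          by (rule geometric_sums) (use u in simp)
        from sums_mult[OF this, of "u^n * exp (-u)"]
        have "(\<lambda>k. u^n * exp (- real (Suc k) * u)) sums (u^n * exp (-u) * (1 / (1 - exp (-u))))"
          by (simp add: exp_of_nat_mult[symmetric] exp_add[symmetric] algebra_simps)
        moreover have "u^n * exp (-u) * (1 / (1 - exp (-u))) = f (1 - exp (-u)) * exp (-u)"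
          by (simp add: f_def)
        ultimately show ?thesis
          by (intro suminf_ennreal_eq) (use True in auto)
      qed
      then show ?thesis by simp
    qed
  qed
  also have "\<dots> = (\<Sum>k. \<integral>\<^sup>+u. ennreal (u^n * exp (- real (Suc k) * u)) * indicator {0..ln 2} u \<partial>lborel)"
    by (rule nn_integral_suminf) measurable
  also have "\<dots> = (\<Sum>k. ennreal (fact n / real (Suc k)^(n+1) - exp (- real (Suc k) * ln 2) * S (real (Suc k)) n (ln 2)))"
  proof (rule suminf_cong)
    fix k
    have I: "((\<lambda>u. u^n * exp (- real (Suc k) * u)) has_integral
       (fact n / real (Suc k)^(n+1) - exp (- real (Suc k) * ln 2) * S (real (Suc k)) n (ln 2))) {0..ln 2}"
      using exp_int[of "real (Suc k)" "ln 2" n] by simp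
    show "(\<integral>\<^sup>+u. ennreal (u^n * exp (- real (Suc k) * u)) * indicator {0..ln 2} u \<partial>lborel) =
       ennreal (fact n / real (Suc k)^(n+1) - exp (- real (Suc k) * ln 2) * S (real (Suc k)) n (ln 2))"
      by (rule nn_integral_has_integral_lebesgue'[OF _ I]) simp
  qed
  also have "\<dots> = ennreal (Xval n)"
  proof (rule suminf_ennreal_eq[OF _ I_sums[OF assms]])
    fix k
    have I: "((\<lambda>u. u^n * exp (- real (Suc k) * u)) has_integral
       (fact n / real (Suc k)^(n+1) - exp (- real (Suc k) * ln 2) * S (real (Suc k)) n (ln 2))) {0..ln 2}"
      using exp_int[of "real (Suc k)" "ln 2" n] by simp
    show "0 \<le> fact n / real (Suc k)^(n+1) - exp (- real (Suc k) * ln 2) * S (real (Suc k)) n (ln 2)"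
      by (rule has_integral_nonneg[OF I]) simp
  qed
  finally show ?thesis .
qed



definition gA :: "real \<Rightarrow> ennreal" where "gA y = ennreal (1/y) * indicator {1/2..1} y"
definition hh :: "real \<Rightarrow> ennreal" where "hh y = ennreal (1/y) * indicator {0..<1/2} y"
definition gB :: "real \<Rightarrow> real \<Rightarrow> ennreal" where "gB t y = ennreal (1/y) * indicator {1-t..1} y"

lemma gA_meas[measurable]: "gA \<in> borel_measurable borel"
  unfolding gA_def by measurable

lemma hh_meas[measurable]: "hh \<in> borel_measurable borel"
  unfolding hh_def by measurable

lemma gB_meas[measurable]: "(\<lambda>x. gB (f x) (g x)) \<in> borel_measurable M"
  if [measurable]: "f \<in> borel_measurable M" "g \<in> borel_measurable M"
proof -
  have e: "(\<lambda>x. gB (f x) (g x)) = (\<lambda>x. ennreal (1 / g x) * (if 1 - f x \<le> g x \<and> g x \<le> 1 then 1 else 0))"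
    by (auto simp: gB_def indicator_def)
  show ?thesis unfolding e by measurable
qed

lemma FB_int:
  fixes I :: "nat set"
  assumes "finite I" "k \<in> I" "card I = Suc n" "n \<ge> 1"
  shows "(\<integral>\<^sup>+x. hh (x k) * (\<Prod>j\<in>I-{k}. gB (x k) (x j)) \<partial>PiM I (\<lambda>_. lborel)) = ennreal (Xval n)"
proof -
  interpret P: product_sigma_finite "\<lambda>_::nat. lborel :: real measure" by standard
  have Ik: "I = insert k (I - {k})" using assms by auto
  have fin: "finite (I - {k})" using assms by auto
  have cI: "card (I - {k}) = n" using assms by auto
  have "(\<integral>\<^sup>+x. hh (x k) * (\<Prod>j\<in>I-{k}. gB (x k) (x j)) \<partial>PiM I (\<lambda>_. lborel))
     = (\<integral>\<^sup>+y. (\<integral>\<^sup>+x. hh ((x(k:=y)) k) * (\<Prod>j\<in>I-{k}. gB ((x(k:=y)) k) ((x(k:=y)) j)) \<partial>PiM (I-{k}) (\<lambda>_. lborel)) \<partial>lborel)"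
    apply (subst Ik)
    apply (rule P.product_nn_integral_insert_rev)
    using fin apply auto[2]
    by measurable
  also have "\<dots> = (\<integral>\<^sup>+y. hh y * ennreal ((- ln (1-y))^n) \<partial>lborel)"
  proof (rule nn_integral_cong)
    fix y :: real
    have "(\<integral>\<^sup>+x. hh ((x(k:=y)) k) * (\<Prod>j\<in>I-{k}. gB ((x(k:=y)) k) ((x(k:=y)) j)) \<partial>PiM (I-{k}) (\<lambda>_. lborel))
       = (\<integral>\<^sup>+x. hh y * (\<Prod>j\<in>I-{k}. gB y (x j)) \<partial>PiM (I-{k}) (\<lambda>_. lborel))"
      by (intro nn_integral_cong) auto
    also have "\<dots> = hh y * (\<integral>\<^sup>+x. (\<Prod>j\<in>I-{k}. gB y (x j)) \<partial>PiM (I-{k}) (\<lambda>_. lborel))"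
      by (rule nn_integral_cmult) measurable
    also have "\<dots> = hh y * (\<Prod>j\<in>I-{k}. integral\<^sup>N lborel (gB y))"
      by (subst P.product_nn_integral_prod) (use fin in auto)
    also have "\<dots> = hh y * ennreal ((- ln (1-y))^n)"
    proof (cases "0 \<le> y \<and> y < 1/2")
      case True
      have "integral\<^sup>N lborel (gB y) = ennreal (- ln (1-y))"
        unfolding gB_def using True by (intro ln_int) auto
      then show ?thesis using cI True by (simp add: ennreal_power)
    next
      case False then show ?thesis by (simp add: hh_def)
    qed
    finally show "(\<integral>\<^sup>+x. hh ((x(k:=y)) k) * (\<Prod>j\<in>I-{k}. gB ((x(k:=y)) k) ((x(k:=y)) j)) \<partial>PiM (I-{k}) (\<lambda>_. lborel))
       = hh y * ennreal ((- ln (1-y))^n)" .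
  qed
  also have "\<dots> = (\<integral>\<^sup>+t. ennreal ((- ln (1-t))^n / t) * indicator {0..1/2} t \<partial>lborel)"
  proof (rule nn_integral_cong_AE)
    show "AE t in lborel. hh t * ennreal ((- ln (1-t))^n) = ennreal ((- ln (1-t))^n / t) * indicator {0..1/2} t"
      using AE_lborel_singleton[of "1/2::real"]
    proof eventually_elim
      case (elim t)
      show ?case
      proof (cases "0 \<le> t \<and> t < 1/2")
        case True
        have "0 \<le> - ln (1-t)" using True by auto
        have "ennreal ((- ln (1-t))^n / t) = ennreal (1/t) * ennreal ((- ln (1-t))^n)"
          using True \<open>0 \<le> - ln (1-t)\<close> by (simp add: ennreal_mult[symmetric])
        then show ?thesis using True by (simp add: hh_def)
      next
        case False
        then have "t \<notin> {0..1/2}" "t \<notin> {0..<1/2}" using elim by auto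
        then show ?thesis by (simp add: hh_def)
      qed
    qed
  qed
  also have "\<dots> = ennreal (Xval n)" by (rule T_int[OF assms(4)])
  finally show ?thesis .
qed



lemma FA_int:
  assumes "finite I"
  shows "(\<integral>\<^sup>+x. (\<Prod>i\<in>I. gA (x i)) \<partial>PiM I (\<lambda>_. lborel)) = ennreal (ln 2 ^ card I)"
proof -
  interpret P: product_sigma_finite "\<lambda>_::'a. lborel :: real measure" by standard
  have g: "integral\<^sup>N lborel gA = ennreal (ln 2)"
    unfolding gA_def using ln_int[of "1/2"] by (simp add: ln_div)
  show ?thesis
    by (subst P.product_nn_integral_prod) (use assms in \<open>auto simp: g ennreal_power\<close>)
qed

lemma W_sym:
  assumes "x \<in> W m" "i < m" "j < m" "i \<noteq> j"
  shows "x i + x j \<ge> 1"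
proof (cases "i < j")
  case True then show ?thesis using assms unfolding W_def by blast
next
  case False
  then have "j < i" using assms by simp
  then have "x j + x i \<ge> 1" using assms unfolding W_def by blast
  then show ?thesis by simp
qed

lemma pointwise:
  assumes x: "x \<in> extensional {..<m}"
  shows "ennreal (1 / (\<Prod>i<m. x i)) * indicator (W m) x =
     (\<Prod>i<m. gA (x i)) + (\<Sum>k<m. hh (x k) * (\<Prod>j\<in>{..<m}-{k}. gB (x k) (x j)))"
proof -
  let ?I = "{..<m}"
  have inv: "ennreal (1 / (\<Prod>i<m. x i)) = (\<Prod>i<m. ennreal (1 / x i))" if "\<forall>i<m. 0 \<le> x i"
  proof -
    have "(\<Prod>i<m. ennreal (1 / x i)) = ennreal (\<Prod>i<m. 1 / x i)"
      by (rule prod_ennreal) (use that in auto)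
    also have "(\<Prod>i<m. 1 / x i) = 1 / (\<Prod>i<m. x i)"
      by (simp add: prod_dividef)
    finally show ?thesis by simp
  qed
  show ?thesis
  proof (cases "\<forall>i<m. x i \<in> {1/2..1}")
    case A: True
    have pe: "x \<in> PiE ?I (\<lambda>_. {0..1})" using A x by (auto simp: PiE_iff)
    have pr: "1 \<le> x i + x j" if "i < m" "j < m" for i j
    proof -
      have "x i \<ge> 1/2" "x j \<ge> 1/2" using A that by auto
      then show ?thesis by simp
    qed
    have xW: "x \<in> W m"
      unfolding W_def using pe pr by blast
    have nn: "\<forall>i<m. 0 \<le> x i" using A by auto
    have "(\<Prod>i<m. gA (x i)) = (\<Prod>i<m. ennreal (1 / x i))"
      by (intro prod.cong refl) (use A in \<open>auto simp: gA_def\<close>)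
    moreover have "hh (x k) = 0" if "k < m" for k
      using A that by (auto simp: hh_def)
    ultimately show ?thesis using xW inv[OF nn] by simp
  next
    case nA: False
    then obtain k where k: "k < m" "x k \<notin> {1/2..1}" by auto
    have "gA (x k) = 0" using k(2) by (simp add: gA_def)
    then have FA0: "(\<Prod>i<m. gA (x i)) = 0"
      using k(1) by (auto intro: prod_zero)
    show ?thesis
    proof (cases "x \<in> W m")
      case xW: True
      have r: "\<forall>i<m. x i \<in> {0..1}" using xW unfolding W_def by (auto simp: PiE_iff)
      with k have xk: "x k < 1/2" "0 \<le> x k" by auto
      have oth: "x j \<ge> 1 - x k" if "j < m" "j \<noteq> k" for j
        using W_sym[OF xW that(1) k(1) that(2)] by simp
      have "(\<Sum>k'<m. hh (x k') * (\<Prod>j\<in>?I-{k'}. gB (x k') (x j))) =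
            hh (x k) * (\<Prod>j\<in>?I-{k}. gB (x k) (x j)) + (\<Sum>k'\<in>?I-{k}. hh (x k') * (\<Prod>j\<in>?I-{k'}. gB (x k') (x j)))"
        by (rule sum.remove) (use k in auto)
      also have "(\<Sum>k'\<in>?I-{k}. hh (x k') * (\<Prod>j\<in>?I-{k'}. gB (x k') (x j))) = 0"
      proof (rule sum.neutral, intro ballI)
        fix k' assume "k' \<in> ?I - {k}"
        then have "x k' > 1/2" using oth xk by force
        then show "hh (x k') * (\<Prod>j\<in>?I-{k'}. gB (x k') (x j)) = 0" by (simp add: hh_def)
      qed
      also have "hh (x k) * (\<Prod>j\<in>?I-{k}. gB (x k) (x j)) = ennreal (1 / x k) * (\<Prod>j\<in>?I-{k}. ennreal (1 / x j))"
        using xk oth r by (auto simp: hh_def gB_def intro!: prod.cong)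
      also have "\<dots> = (\<Prod>i<m. ennreal (1 / x i))"
        by (rule prod.remove[symmetric]) (use k in auto)
      finally show ?thesis using FA0 xW inv r by auto
    next
      case xW: False
      have "hh (x k') * (\<Prod>j\<in>?I-{k'}. gB (x k') (x j)) = 0" if k': "k' < m" for k'
      proof (rule ccontr)
        assume ne: "hh (x k') * (\<Prod>j\<in>?I-{k'}. gB (x k') (x j)) \<noteq> 0"
        then have xk: "0 \<le> x k'" "x k' < 1/2" by (auto simp: hh_def indicator_def split: if_splits)
        have oth: "1 - x k' \<le> x j \<and> x j \<le> 1" if "j < m" "j \<noteq> k'" for j
        proof -
          have "gB (x k') (x j) \<noteq> 0" using ne that by auto
          then show ?thesis by (auto simp: gB_def indicator_def split: if_splits)
        qed
        have "x \<in> W m"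
          unfolding W_def
        proof (intro CollectI conjI allI impI)
          show "x \<in> PiE ?I (\<lambda>_. {0..1})"
          proof -
            have "x i \<in> {0..1}" if "i < m" for i
            proof (cases "i = k'")
              case True then show ?thesis using xk by auto
            next
              case False then have "1 - x k' \<le> x i \<and> x i \<le> 1" using oth that by blast
              then show ?thesis using xk by auto
            qed
            then show ?thesis using x by (auto simp: PiE_iff)
          qed
          fix i j assume "i < m" "j < m" "i < j"
          show "1 \<le> x i + x j"
          proof (cases "i = k'")
            case True
            then have "j \<noteq> k'" using \<open>i < j\<close> by simp
            then have "1 - x k' \<le> x j" using oth \<open>j < m\<close> by blast
            then show ?thesis using True by simp
          next
            case F1: False
            then have a: "1 - x k' \<le> x i" using oth \<open>i < m\<close> by blast
            show ?thesis
            proof (cases "j = k'")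
              case True then show ?thesis using a by simp
            next
              case False
              then have "1 - x k' \<le> x j" using oth \<open>j < m\<close> by blast
              then show ?thesis using a xk by simp
            qed
          qed
        qed
        with xW show False by simp
      qed
      then show ?thesis using FA0 xW by simp
    qed
  qed
qed



lemma final_arith:
  assumes "m = Suc (Suc q)"
  shows "ln 2 ^ m + real m * Xval (Suc q) = fact m * zeta_nat m - real (m - 1) * ln 2 ^ m
        - fact m * (\<Sum>p=0..m-2. ln 2 ^ p / fact p * polylog (m - p) (1/2))"
proof -
  have s: "(\<Sum>p\<le>Suc q. fact (Suc q) / fact p * ln 2 ^ p * polylog (Suc q+1-p) (1/2))
     = (\<Sum>p\<le>q. fact (Suc q) / fact p * ln 2 ^ p * polylog (Suc q+1-p) (1/2)) + ln 2 ^ Suc (Suc q)"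
    using polylog_1 by simp
  have s2: "real m * (\<Sum>p\<le>q. fact (Suc q) / fact p * ln 2 ^ p * polylog (Suc q+1-p) (1/2))
      = fact m * (\<Sum>p=0..m-2. ln 2 ^ p / fact p * polylog (m - p) (1/2))"
    unfolding sum_distrib_left using assms
    by (auto simp: atLeast0AtMost intro!: sum.cong)
  have f: "real m * fact (Suc q) = fact m" using assms by simp
  show ?thesis
    unfolding Xval_def s right_diff_distrib distrib_left s2[symmetric]
    using assms f by (simp add: algebra_simps)
qed

theorem theorem7:
  fixes m :: nat
  assumes "m \<ge> 2"
  shows "(\<integral>\<^sup>+ x \<in> W m. ennreal (1 / (\<Prod>i<m. x i)) \<partial>(PiM {..<m} (\<lambda>_. lborel)))
    = ennreal (fact m * zeta_nat m - real (m - 1) * ln 2 ^ m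
        - fact m * (\<Sum>p=0..m-2. ln 2 ^ p / fact p * polylog (m - p) (1/2)))"
proof -
  obtain q where mq: "m = Suc (Suc q)" using assms by (metis add_2_eq_Suc le_Suc_ex)
  let ?M = "PiM {..<m} (\<lambda>_. lborel :: real measure)"
  have "(\<integral>\<^sup>+ x \<in> W m. ennreal (1 / (\<Prod>i<m. x i)) \<partial>?M)
     = (\<integral>\<^sup>+ x. (\<Prod>i<m. gA (x i)) + (\<Sum>k<m. hh (x k) * (\<Prod>j\<in>{..<m}-{k}. gB (x k) (x j))) \<partial>?M)"
    by (intro nn_integral_cong pointwise) (auto simp: space_PiM PiE_iff)
  also have "\<dots> = (\<integral>\<^sup>+ x. (\<Prod>i<m. gA (x i)) \<partial>?M) + (\<integral>\<^sup>+ x. (\<Sum>k<m. hh (x k) * (\<Prod>j\<in>{..<m}-{k}. gB (x k) (x j))) \<partial>?M)"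
    by (rule nn_integral_add) measurable
  also have "(\<integral>\<^sup>+ x. (\<Sum>k<m. hh (x k) * (\<Prod>j\<in>{..<m}-{k}. gB (x k) (x j))) \<partial>?M)
      = (\<Sum>k<m. \<integral>\<^sup>+ x. hh (x k) * (\<Prod>j\<in>{..<m}-{k}. gB (x k) (x j)) \<partial>?M)"
    by (rule nn_integral_sum) measurable
  also have "\<dots> = (\<Sum>k<m. ennreal (Xval (Suc q)))"
    by (intro sum.cong refl FB_int) (use mq in auto)
  also have "(\<integral>\<^sup>+ x. (\<Prod>i<m. gA (x i)) \<partial>?M) = ennreal (ln 2 ^ m)"
    using FA_int[of "{..<m}"] by simp
  also have "ennreal (ln 2 ^ m) + (\<Sum>k<m. ennreal (Xval (Suc q))) = ennreal (ln 2 ^ m + real m * Xval (Suc q))"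
    using Xval_nonneg[of "Suc q"] by (simp add: ennreal_plus ennreal_mult ennreal_of_nat_eq_real_of_nat)
  also have "ln 2 ^ m + real m * Xval (Suc q) = fact m * zeta_nat m - real (m - 1) * ln 2 ^ m
        - fact m * (\<Sum>p=0..m-2. ln 2 ^ p / fact p * polylog (m - p) (1/2))"
    by (rule final_arith[OF mq])
  finally show ?thesis .
qed

end
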